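(* Let $L=\{(x,\,y,\,y+z): x,y\in B,\ z\in C_8\}\subset E^{24}$. Then $L$ is contained in the set of even-weight words, and $\chi_L$ is a perfect coloring of the halved cube $\tfrac12 H^{0}_{24}$ with parameters $((28,248)(8,268))$.
   Context: $E^n$ is the set of binary words of length $n$ with coordinatewise addition mod $2$. $\tfrac12 H^{0}_{24}$ is the graph on the even-weight words of $E^{24}$, adjacent iff at Hamming distance exactly $2$ (degree $276$). $B\subset E^8$ is the set of even-weight words of length $8$ (the $(8,128,2)$-code containing $00000000$). $C_8\subset E^8$ is the linear span of $11111111$ and of the seven words obtained from $00101110$ by cyclically permuting its first seven coordinates (a linear $(8,16,4)$-code). (The paper writes $C_1$ in the definition of $L$; it denotes an $(8,16,4)$-code such as $C_8$.) For a set $C$, $\chi_C$ is a perfect coloring with parameters $((a,b)(c,d))$ if every vertex of $C$ has exactly $a$ neighbours in $C$ and $b$ outside, and every vertex outside $C$ has exactly $c$ neighbours in $C$ and $d$ outside. *)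

theory Defs
  imports Main
begin

text \<open>Binary words of length n are bool lists of length n (True = 1).\<close>

definition wadd :: "bool list \<Rightarrow> bool list \<Rightarrow> bool list" where
  "wadd u v = map2 (\<noteq>) u v"

definition wt :: "bool list \<Rightarrow> nat" where
  "wt w = length (filter id w)"

definition hdist :: "bool list \<Rightarrow> bool list \<Rightarrow> nat" where
  "hdist u v = wt (wadd u v)"

definition words :: "nat \<Rightarrow> bool list set" where
  "words n = {w. length w = n}"

text \<open>Even-weight words of E^n: vertex set of the halved cube\<close>
definition even_words :: "nat \<Rightarrow> bool list set" where
  "even_words n = {w \<in> words n. even (wt w)}"

definition halved_adj :: "bool list \<Rightarrow> bool list \<Rightarrow> bool" where
  "halved_adj u v \<longleftrightarrow> hdist u v = 2"

inductive_set gf2_span :: "nat \<Rightarrow> bool list set \<Rightarrow> bool list set" for n G where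
  zero: "replicate n False \<in> gf2_span n G"
| add: "g \<in> G \<Longrightarrow> v \<in> gf2_span n G \<Longrightarrow> wadd g v \<in> gf2_span n G"

definition B8 :: "bool list set" where
  "B8 = even_words 8"

definition w00101110 :: "bool list" where
  "w00101110 = [False, False, True, False, True, True, True, False]"

definition shift7 :: "nat \<Rightarrow> bool list \<Rightarrow> bool list" where
  "shift7 k w = rotate k (take 7 w) @ drop 7 w"

definition C8 :: "bool list set" where
  "C8 = gf2_span 8 (insert (replicate 8 True) {shift7 k w00101110 | k. k < 7})"

definition Lcode :: "bool list set" where
  "Lcode = {x @ y @ wadd y z | x y z. x \<in> B8 \<and> y \<in> B8 \<and> z \<in> C8}"

definition perfect_coloring ::
  "'v set \<Rightarrow> ('v \<Rightarrow> 'v \<Rightarrow> bool) \<Rightarrow> 'v set \<Rightarrow> nat \<Rightarrow> nat \<Rightarrow> nat \<Rightarrow> nat \<Rightarrow> bool" where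
  "perfect_coloring V adj C a b c d \<longleftrightarrow>
     (\<forall>v \<in> V \<inter> C. card {u \<in> V. adj v u \<and> u \<in> C} = a \<and> card {u \<in> V. adj v u \<and> u \<notin> C} = b) \<and>
     (\<forall>v \<in> V - C. card {u \<in> V. adj v u \<and> u \<in> C} = c \<and> card {u \<in> V. adj v u \<and> u \<notin> C} = d)"

end

theory Submission imports Defs begin


lemma wadd_Cons[simp]: "wadd (a#u) (b#v) = (a \<noteq> b) # wadd u v" by (simp add: wadd_def)
lemma wadd_Nil1[simp]: "wadd [] v = []" by (simp add: wadd_def)
lemma wadd_Nil2[simp]: "wadd u [] = []" by (simp add: wadd_def)
lemma length_wadd[simp]: "length (wadd u v) = min (length u) (length v)" by (simp add: wadd_def)
lemma wt_Nil[simp]: "wt [] = 0" by (simp add: wt_def)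
lemma wt_Cons[simp]: "wt (a#u) = (if a then Suc (wt u) else wt u)" by (simp add: wt_def)
lemma wt_append[simp]: "wt (u @ v) = wt u + wt v" by (simp add: wt_def)
lemma wadd_append: "length a = length x \<Longrightarrow> wadd (a@b) (x@y) = wadd a x @ wadd b y"
  by (simp add: wadd_def)
lemma wadd_comm: "wadd u v = wadd v u"
proof (induction u arbitrary: v)
  case Nil then show ?case by simp
next
  case (Cons a u) then show ?case by (cases v) auto
qed
lemma wadd_assoc: "wadd (wadd u v) w = wadd u (wadd v w)"
proof (induction u arbitrary: v w)
  case Nil then show ?case by simp
next
  case (Cons a u) then show ?case
    by (cases v; cases w) auto
qed
lemma wadd_cancel: "length u = length v \<Longrightarrow> wadd u (wadd u v) = v"
proof (induction u arbitrary: v)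
  case Nil then show ?case by simp
next
  case (Cons a u) then show ?case by (cases v) auto
qed
lemma wadd_zero: "length u = n \<Longrightarrow> wadd u (replicate n False) = u"
  by (induction u arbitrary: n) auto
lemma even_wt_wadd: "length u = length v \<Longrightarrow> even (wt (wadd u v)) = (even (wt u) = even (wt v))"
proof (induction u arbitrary: v)
  case Nil then show ?case by simp
next
  case (Cons a u) then show ?case by (cases v) auto
qed
lemma wt_zero_imp: "wt u = 0 \<Longrightarrow> u = replicate (length u) False"
  by (induction u) (auto split: if_splits)

fun allw :: "nat \<Rightarrow> bool list list" where
"allw 0 = [[]]" | "allw (Suc n) = map (Cons False) (allw n) @ map (Cons True) (allw n)"

lemma set_allw: "set (allw n) = words n"
proof (induction n)
  case 0 then show ?case by (auto simp: words_def)
next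
  case (Suc n)
  show ?case
  proof
    show "set (allw (Suc n)) \<subseteq> words (Suc n)" using Suc by (auto simp: words_def)
    show "words (Suc n) \<subseteq> set (allw (Suc n))"
    proof
      fix w assume "w \<in> words (Suc n)"
      then obtain b u where "w = b # u" "u \<in> words n" by (auto simp: words_def length_Suc_conv)
      then show "w \<in> set (allw (Suc n))" using Suc by (cases b) auto
    qed
  qed
qed

lemma distinct_allw: "distinct (allw n)"
  by (induction n) (auto simp: distinct_map)

definition C8L :: "bool list list" where "C8L = [
[False,False,False,False,False,False,False,False],
[False,False,False,True,True,False,True,True],
[False,False,True,False,True,True,True,False],
[False,False,True,True,False,True,False,True],
[False,True,False,False,False,True,True,True],
[False,True,False,True,True,True,False,False],
[False,True,True,False,True,False,False,True],
[False,True,True,True,False,False,True,False],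
[True,False,False,False,True,True,False,True],
[True,False,False,True,False,True,True,False],
[True,False,True,False,False,False,True,True],
[True,False,True,True,True,False,False,False],
[True,True,False,False,True,False,True,False],
[True,True,False,True,False,False,False,True],
[True,True,True,False,False,True,False,False],
[True,True,True,True,True,True,True,True]]"

definition GL :: "bool list list" where "GL = [
[True,True,True,True,True,True,True,True],
[False,False,True,False,True,True,True,False],
[False,True,False,True,True,True,False,False],
[True,False,True,True,True,False,False,False],
[False,True,True,True,False,False,True,False],
[True,True,True,False,False,True,False,False],
[True,True,False,False,True,False,True,False],
[True,False,False,True,False,True,True,False]]"

lemma gens_map: "map (\<lambda>k. shift7 k w00101110) [0..<7] = tl GL"
  by code_simp

lemma gens: "insert (replicate 8 True) {shift7 k w00101110 | k. k < 7} = set GL"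
proof -
  have "{shift7 k w00101110 | k. k < 7} = (\<lambda>k. shift7 k w00101110) ` {..<7}"
    by auto
  also have "\<dots> = set (map (\<lambda>k. shift7 k w00101110) [0..<7])"
    by (simp only: set_map set_upt atLeast0LessThan)
  also have "\<dots> = set (tl GL)" by (simp only: gens_map)
  finally show ?thesis by (simp add: GL_def eval_nat_numeral)
qed

lemma GL_closed: "\<forall>g\<in>set GL. \<forall>v\<in>set C8L. wadd g v \<in> set C8L" by code_simp
lemma C8L_gen: "\<forall>c\<in>set C8L. \<exists>gs\<in>set (subseqs GL). foldr wadd gs (replicate 8 False) = c" by code_simp

lemma foldr_span: "set gs \<subseteq> G \<Longrightarrow> foldr wadd gs (replicate n False) \<in> gf2_span n G"
  by (induction gs) (auto intro: gf2_span.intros)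

lemma C8_eq: "C8 = set C8L"
proof
  show "C8 \<subseteq> set C8L"
  proof
    fix x assume "x \<in> C8"
    then have "x \<in> gf2_span 8 (set GL)" by (simp add: C8_def gens)
    then show "x \<in> set C8L"
    proof induction
      case zero show ?case by (simp add: C8L_def numeral_eq_Suc)
    next
      case (add g v) then show ?case using GL_closed by blast
    qed
  qed
  show "set C8L \<subseteq> C8"
  proof
    fix c assume "c \<in> set C8L"
    then obtain gs where gs: "gs \<in> set (subseqs GL)" "foldr wadd gs (replicate 8 False) = c"
      using C8L_gen by blast
    have "set gs \<subseteq> set GL" using gs(1) subseqs_powset[of GL] by auto
    then show "c \<in> C8" using foldr_span[of gs "set GL" 8] gs(2) by (simp add: C8_def gens)
  qed
qed


fun inC8 :: "bool list \<Rightarrow> bool" where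
"inC8 [a,b,c,d,e,f,g,h] = ((d = e) = (g = h) \<and> (c = e) = (f = g) \<and> (b = f) = (g = h) \<and> ((a = b) = (c = d)) = ((e = f) = (g = h)))"
| "inC8 _ = False"

definition U1 :: "bool list list" where "U1 = filter (\<lambda>e. wt e = 1) (allw 8)"
definition U2 :: "bool list list" where "U2 = filter (\<lambda>e. wt e = 2) (allw 8)"

lemma inC8_ok: "\<forall>s\<in>set (allw 8). inC8 s = (s \<in> set C8L)" by code_simp
lemma F1: "\<forall>s\<in>set (allw 8). odd (wt s) \<longrightarrow> length (filter (\<lambda>e. inC8 (wadd s e)) U1) = 1"
  by code_simp
lemma F3: "\<forall>s\<in>set (allw 8). even (wt s) \<longrightarrow> length (filter (\<lambda>(e1,e2). inC8 (wadd s (wadd e1 e2))) (List.product U1 U1)) = 8"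
  by code_simp
lemma F2: "\<forall>s\<in>set (allw 8). even (wt s) \<longrightarrow> length (filter (\<lambda>e. inC8 (wadd s e)) U2) = (if inC8 s then 0 else 4)"
  by code_simp
lemma len_U1: "length U1 = 8" by code_simp
lemma len_U2: "length U2 = 28" by code_simp

lemma mem_allw8: "length s = 8 \<Longrightarrow> s \<in> set (allw 8)"
  by (simp add: set_allw words_def)

lemma U1_mem: "x \<in> set U1 \<longleftrightarrow> length x = 8 \<and> wt x = 1"
  by (auto simp: U1_def set_allw words_def)
lemma U2_mem: "x \<in> set U2 \<longleftrightarrow> length x = 8 \<and> wt x = 2"
  by (auto simp: U2_def set_allw words_def)
lemma distinct_U1: "distinct U1" by (simp add: U1_def distinct_allw)
lemma distinct_U2: "distinct U2" by (simp add: U2_def distinct_allw)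

lemma C8L_len: "s \<in> set C8L \<Longrightarrow> length s = 8" by (auto simp: C8L_def)
lemma C8L_even: "s \<in> set C8L \<Longrightarrow> even (wt s)" by (auto simp: C8L_def)

lemma C8_char: "s \<in> C8 \<longleftrightarrow> length s = 8 \<and> inC8 s"
  using inC8_ok mem_allw8 C8L_len by (auto simp: C8_eq)

lemma B8_mem: "x \<in> B8 \<longleftrightarrow> length x = 8 \<and> even (wt x)"
  by (simp add: B8_def even_words_def words_def)

lemma L_char:
  assumes "length x = 8" "length y = 8" "length c = 8"
  shows "(x@y@c \<in> Lcode) = (even (wt x) \<and> even (wt y) \<and> inC8 (wadd y c))"
proof
  assume "x@y@c \<in> Lcode"
  then obtain x' y' z where e: "x@y@c = x'@y'@wadd y' z" and h: "x' \<in> B8" "y' \<in> B8" "z \<in> C8"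
    unfolding Lcode_def by blast
  from h have l: "length x' = 8" "length y' = 8" "length z = 8" by (auto simp: B8_mem C8_char)
  from e l assms have "x = x'" "y = y'" "c = wadd y' z" by auto
  then show "even (wt x) \<and> even (wt y) \<and> inC8 (wadd y c)"
    using h l by (simp add: wadd_cancel B8_mem C8_char)
next
  assume h: "even (wt x) \<and> even (wt y) \<and> inC8 (wadd y c)"
  have "x@y@c = x@y@wadd y (wadd y c)" using assms by (simp add: wadd_cancel)
  moreover have "x \<in> B8" "y \<in> B8" "wadd y c \<in> C8" using h assms by (auto simp: B8_mem C8_char)
  ultimately show "x@y@c \<in> Lcode" unfolding Lcode_def by blast
qed

lemma L_even: "Lcode \<subseteq> even_words 24"
proof
  fix w assume "w \<in> Lcode"
  then obtain x y z where e: "w = x@y@wadd y z" and h: "x \<in> B8" "y \<in> B8" "z \<in> C8"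
    unfolding Lcode_def by blast
  have l: "length x = 8" "length y = 8" "length z = 8" using h by (auto simp: B8_mem C8_char)
  have "even (wt z)" using h(3) C8L_even by (simp add: C8_eq)
  then have "even (wt (wadd y z))" using h(2) l by (simp add: even_wt_wadd B8_mem)
  then show "w \<in> even_words 24" using e l h by (simp add: even_words_def words_def B8_mem)
qed

lemma nbr:
  assumes v: "v \<in> even_words 24"
  shows "card {u \<in> even_words 24. halved_adj v u \<and> P u} = card {w \<in> words 24. wt w = 2 \<and> P (wadd v w)}"
proof -
  have lv: "length v = 24" "even (wt v)" using v by (auto simp: even_words_def words_def)
  have "{u \<in> even_words 24. halved_adj v u \<and> P u} = wadd v ` {w \<in> words 24. wt w = 2 \<and> P (wadd v w)}"
  proof
    show "{u \<in> even_words 24. halved_adj v u \<and> P u} \<subseteq> wadd v ` {w \<in> words 24. wt w = 2 \<and> P (wadd v w)}"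
    proof
      fix u assume u: "u \<in> {u \<in> even_words 24. halved_adj v u \<and> P u}"
      then have lu: "length u = 24" by (auto simp: even_words_def words_def)
      have "u = wadd v (wadd v u)" using lu lv by (simp add: wadd_cancel)
      moreover have "wadd v u \<in> {w \<in> words 24. wt w = 2 \<and> P (wadd v w)}"
        using u lu lv by (auto simp: words_def halved_adj_def hdist_def wadd_cancel)
      ultimately show "u \<in> wadd v ` {w \<in> words 24. wt w = 2 \<and> P (wadd v w)}" by blast
    qed
    show "wadd v ` {w \<in> words 24. wt w = 2 \<and> P (wadd v w)} \<subseteq> {u \<in> even_words 24. halved_adj v u \<and> P u}"
    proof
      fix u assume "u \<in> wadd v ` {w \<in> words 24. wt w = 2 \<and> P (wadd v w)}"
      then obtain w where w: "u = wadd v w" "length w = 24" "wt w = 2" "P (wadd v w)"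
        by (auto simp: words_def)
      have "even (wt u)" using w lv by (simp add: even_wt_wadd)
      then show "u \<in> {u \<in> even_words 24. halved_adj v u \<and> P u}"
        using w lv by (simp add: even_words_def words_def halved_adj_def hdist_def wadd_cancel)
    qed
  qed
  moreover have "inj_on (wadd v) {w \<in> words 24. wt w = 2 \<and> P (wadd v w)}"
    by (rule inj_on_inverseI[where g="wadd v"]) (use lv in \<open>auto simp: words_def wadd_cancel\<close>)
  ultimately show ?thesis by (simp add: card_image)
qed


abbreviation Z8 :: "bool list" where "Z8 \<equiv> replicate 8 False"

definition T :: "(bool list \<times> bool list \<times> bool list) list" where
"T = map (\<lambda>x. (x,Z8,Z8)) U2 @ map (\<lambda>y. (Z8,y,Z8)) U2 @ map (\<lambda>z. (Z8,Z8,z)) U2 @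
     map (\<lambda>(x,y). (x,y,Z8)) (List.product U1 U1) @ map (\<lambda>(x,z). (x,Z8,z)) (List.product U1 U1) @
     map (\<lambda>(y,z). (Z8,y,z)) (List.product U1 U1)"

lemma wt_Z8: "wt Z8 = 0" by (simp add: wt_def)

lemma sum2_cases: "(a::nat) + b + c = 2 \<Longrightarrow> (a = 2 \<and> b = 0 \<and> c = 0) \<or> (a = 0 \<and> b = 2 \<and> c = 0) \<or>
          (a = 0 \<and> b = 0 \<and> c = 2) \<or> (a = 1 \<and> b = 1 \<and> c = 0) \<or>
          (a = 1 \<and> b = 0 \<and> c = 1) \<or> (a = 0 \<and> b = 1 \<and> c = 1)" by presburger

lemma setT: "set T = {(x,y,z). length x = 8 \<and> length y = 8 \<and> length z = 8 \<and> wt x + wt y + wt z = 2}"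
proof
  show "set T \<subseteq> {(x,y,z). length x = 8 \<and> length y = 8 \<and> length z = 8 \<and> wt x + wt y + wt z = 2}"
    by (auto simp: T_def U1_mem U2_mem wt_Z8)
  show "{(x,y,z). length x = 8 \<and> length y = 8 \<and> length z = 8 \<and> wt x + wt y + wt z = 2} \<subseteq> set T"
  proof clarify
    fix x y z :: "bool list"
    assume h: "length x = 8" "length y = 8" "length z = 8" "wt x + wt y + wt z = 2"
    have zx: "wt x = 0 \<Longrightarrow> x = Z8" using wt_zero_imp[of x] h by simp
    have zy: "wt y = 0 \<Longrightarrow> y = Z8" using wt_zero_imp[of y] h by simp
    have zz: "wt z = 0 \<Longrightarrow> z = Z8" using wt_zero_imp[of z] h by simp
    have "(wt x = 2 \<and> wt y = 0 \<and> wt z = 0) \<or> (wt x = 0 \<and> wt y = 2 \<and> wt z = 0) \<or>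
          (wt x = 0 \<and> wt y = 0 \<and> wt z = 2) \<or> (wt x = 1 \<and> wt y = 1 \<and> wt z = 0) \<or>
          (wt x = 1 \<and> wt y = 0 \<and> wt z = 1) \<or> (wt x = 0 \<and> wt y = 1 \<and> wt z = 1)"
      using sum2_cases[OF h(4)] .
    then show "(x,y,z) \<in> set T"
    proof (elim disjE conjE)
      assume "wt x = 2" "wt y = 0" "wt z = 0"
      then show ?thesis using h zy zz by (auto simp: T_def U1_mem U2_mem)
    next
      assume "wt x = 0" "wt y = 2" "wt z = 0"
      then show ?thesis using h zx zz by (auto simp: T_def U1_mem U2_mem)
    next
      assume "wt x = 0" "wt y = 0" "wt z = 2"
      then show ?thesis using h zx zy by (auto simp: T_def U1_mem U2_mem)
    next
      assume "wt x = 1" "wt y = 1" "wt z = 0"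
      then show ?thesis using h zz by (auto simp: T_def U1_mem U2_mem image_iff)
    next
      assume "wt x = 1" "wt y = 0" "wt z = 1"
      then show ?thesis using h zy by (auto simp: T_def U1_mem U2_mem image_iff)
    next
      assume "wt x = 0" "wt y = 1" "wt z = 1"
      then show ?thesis using h zx by (auto simp: T_def U1_mem U2_mem image_iff)
    qed
  qed
qed

lemma distinctT: "distinct T"
proof -
  have i1: "inj_on (\<lambda>(x::bool list,y::bool list). (x,y,Z8)) A" for A by (auto simp: inj_on_def)
  have i2: "inj_on (\<lambda>(x::bool list,z::bool list). (x,Z8,z)) A" for A by (auto simp: inj_on_def)
  have i3: "inj_on (\<lambda>(y::bool list,z::bool list). (Z8,y,z)) A" for A by (auto simp: inj_on_def)
  show ?thesis
    unfolding T_def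
    by (simp add: distinct_map distinct_U1 distinct_U2 distinct_product i1 i2 i3 inj_on_def)
       (auto simp: U1_mem U2_mem wt_Z8)
qed

lemma triple:
  "card {w \<in> words 24. wt w = 2 \<and> Q w} = length (filter (\<lambda>(x,y,z). Q (x@y@z)) T)"
proof -
  let ?F = "filter (\<lambda>(x,y,z). Q (x@y@z)) T"
  have "{w \<in> words 24. wt w = 2 \<and> Q w} = (\<lambda>(x,y,z). x@y@z) ` set ?F"
  proof
    show "{w \<in> words 24. wt w = 2 \<and> Q w} \<subseteq> (\<lambda>(x,y,z). x@y@z) ` set ?F"
    proof
      fix w assume w: "w \<in> {w \<in> words 24. wt w = 2 \<and> Q w}"
      then have lw: "length w = 24" by (simp add: words_def)
      have d: "drop 8 (drop 8 w) = drop 16 w" by simp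
      have e: "w = take 8 w @ take 8 (drop 8 w) @ drop 16 w"
        by (simp only: append_take_drop_id flip: d)
      have qw: "Q w" using w by simp
      have q: "Q (take 8 w @ take 8 (drop 8 w) @ drop 16 w)" using qw e by metis
      have "(take 8 w, take 8 (drop 8 w), drop 16 w) \<in> set ?F"
        using w lw arg_cong[OF e, of wt] q unfolding setT set_filter
        by (auto simp: words_def)
      then show "w \<in> (\<lambda>(x,y,z). x@y@z) ` set ?F" using e by force
    qed
    show "(\<lambda>(x,y,z). x@y@z) ` set ?F \<subseteq> {w \<in> words 24. wt w = 2 \<and> Q w}"
      by (auto simp: setT words_def)
  qed
  moreover have "inj_on (\<lambda>(x,y,z). x@y@z) (set ?F)"
    by (auto simp: inj_on_def setT)
  ultimately have "card {w \<in> words 24. wt w = 2 \<and> Q w} = card (set ?F)"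
    by (simp add: card_image)
  also have "\<dots> = length ?F" by (intro distinct_card distinct_filter distinctT)
  finally show ?thesis .
qed



definition Rf :: "bool \<Rightarrow> bool \<Rightarrow> bool list \<Rightarrow> bool list \<times> bool list \<times> bool list \<Rightarrow> bool" where
"Rf ea eb s = (\<lambda>(x,y,z). (ea = even (wt x)) \<and> (eb = even (wt y)) \<and> inC8 (wadd s (wadd y z)))"

definition f1 where "f1 s = length (filter (\<lambda>e. inC8 (wadd s e)) U1)"
definition f2 where "f2 s = length (filter (\<lambda>e. inC8 (wadd s e)) U2)"
definition g3 where "g3 s = length (filter (\<lambda>(e1,e2). inC8 (wadd s (wadd e1 e2))) (List.product U1 U1))"

lemma len_filter_cong: "(\<And>x. x \<in> set xs \<Longrightarrow> P x = Q x) \<Longrightarrow> length (filter P xs) = length (filter Q xs)"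
  by (metis filter_cong)

lemma len_filter_conj: "length (filter (\<lambda>p. c \<and> Q p) xs) = (if c then length (filter Q xs) else 0)"
  by simp

lemma prod_snd: "length (filter (\<lambda>p. Q (snd p)) (List.product xs ys)) = length xs * length (filter Q ys)"
  by (induction xs) (simp_all add: filter_map o_def)

lemma wadd_Z8l: "length z = 8 \<Longrightarrow> wadd Z8 z = z" by (metis wadd_comm wadd_zero)

lemma count_formula:
  assumes ls: "length s = 8"
  shows "length (filter (Rf ea eb s) T) =
     (if ea \<and> eb \<and> inC8 s then 28 else 0) + (if ea \<and> eb then f2 s else 0) + (if ea \<and> eb then f2 s else 0)
     + (if \<not> ea \<and> \<not> eb then 8 * f1 s else 0) + (if \<not> ea \<and> eb then 8 * f1 s else 0)
     + (if ea \<and> \<not> eb then g3 s else 0)"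
proof -
  have p1: "length (filter (Rf ea eb s \<circ> (\<lambda>x. (x,Z8,Z8))) U2) = (if ea \<and> eb \<and> inC8 s then 28 else 0)"
  proof -
    have "length (filter (Rf ea eb s \<circ> (\<lambda>x. (x,Z8,Z8))) U2) = length (filter (\<lambda>x. ea \<and> eb \<and> inC8 s) U2)"
      by (rule len_filter_cong) (simp add: Rf_def U2_mem wt_Z8 wadd_zero ls)
    then show ?thesis by (simp add: len_U2)
  qed
  have p2: "length (filter (Rf ea eb s \<circ> (\<lambda>y. (Z8,y,Z8))) U2) = (if ea \<and> eb then f2 s else 0)"
  proof -
    have "length (filter (Rf ea eb s \<circ> (\<lambda>y. (Z8,y,Z8))) U2) = length (filter (\<lambda>y. (ea \<and> eb) \<and> inC8 (wadd s y)) U2)"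
      by (rule len_filter_cong) (simp add: Rf_def U2_mem wt_Z8 wadd_zero ls)
    then show ?thesis by (simp only: len_filter_conj f2_def)
  qed
  have p3: "length (filter (Rf ea eb s \<circ> (\<lambda>z. (Z8,Z8,z))) U2) = (if ea \<and> eb then f2 s else 0)"
  proof -
    have "length (filter (Rf ea eb s \<circ> (\<lambda>z. (Z8,Z8,z))) U2) = length (filter (\<lambda>y. (ea \<and> eb) \<and> inC8 (wadd s y)) U2)"
      by (rule len_filter_cong) (simp add: Rf_def U2_mem wt_Z8 wadd_Z8l ls)
    then show ?thesis by (simp only: len_filter_conj f2_def)
  qed
  have p4: "length (filter (Rf ea eb s \<circ> (\<lambda>(x,y). (x,y,Z8))) (List.product U1 U1)) = (if \<not> ea \<and> \<not> eb then 8 * f1 s else 0)"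
  proof -
    have "length (filter (Rf ea eb s \<circ> (\<lambda>(x,y). (x,y,Z8))) (List.product U1 U1)) =
          length (filter (\<lambda>p. (\<not> ea \<and> \<not> eb) \<and> inC8 (wadd s (snd p))) (List.product U1 U1))"
      by (rule len_filter_cong) (auto simp: Rf_def U1_mem wadd_zero)
    then show ?thesis using prod_snd[of "\<lambda>e. inC8 (wadd s e)" U1 U1] by (simp add: f1_def len_U1)
  qed
  have p5: "length (filter (Rf ea eb s \<circ> (\<lambda>(x,z). (x,Z8,z))) (List.product U1 U1)) = (if \<not> ea \<and> eb then 8 * f1 s else 0)"
  proof -
    have "length (filter (Rf ea eb s \<circ> (\<lambda>(x,z). (x,Z8,z))) (List.product U1 U1)) =
          length (filter (\<lambda>p. (\<not> ea \<and> eb) \<and> inC8 (wadd s (snd p))) (List.product U1 U1))"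
      by (rule len_filter_cong) (auto simp: Rf_def U1_mem wadd_Z8l wt_Z8)
    then show ?thesis using prod_snd[of "\<lambda>e. inC8 (wadd s e)" U1 U1] by (simp add: f1_def len_U1)
  qed
  have p6: "length (filter (Rf ea eb s \<circ> (\<lambda>(y,z). (Z8,y,z))) (List.product U1 U1)) = (if ea \<and> \<not> eb then g3 s else 0)"
  proof -
    have "length (filter (Rf ea eb s \<circ> (\<lambda>(y,z). (Z8,y,z))) (List.product U1 U1)) =
          length (filter (\<lambda>p. (ea \<and> \<not> eb) \<and> (\<lambda>(e1,e2). inC8 (wadd s (wadd e1 e2))) p) (List.product U1 U1))"
      by (rule len_filter_cong) (auto simp: Rf_def U1_mem wt_Z8)
    then show ?thesis by (simp only: len_filter_conj g3_def)
  qed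
  show ?thesis
    unfolding T_def filter_append length_append filter_map length_map
    using p1 p2 p3 p4 p5 p6 by simp
qed

lemma lenT: "length T = 276" by (simp add: T_def len_U1 len_U2)

lemma xor4: "wadd (wadd b y) (wadd c z) = wadd (wadd b c) (wadd y z)"
  by (metis wadd_assoc wadd_comm)

lemma reduce:
  assumes v: "v \<in> even_words 24"
  defines "a \<equiv> take 8 v" and "b \<equiv> take 8 (drop 8 v)" and "c \<equiv> drop 16 v"
  shows "card {u \<in> even_words 24. halved_adj v u \<and> u \<in> Lcode} = length (filter (Rf (even (wt a)) (even (wt b)) (wadd b c)) T)"
    and "card {u \<in> even_words 24. halved_adj v u \<and> u \<notin> Lcode} = 276 - length (filter (Rf (even (wt a)) (even (wt b)) (wadd b c)) T)"
proof -
  have lv: "length v = 24" using v by (simp add: even_words_def words_def)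
  have d: "drop 8 (drop 8 v) = drop 16 v" by simp
  have e: "v = a @ b @ c" unfolding a_def b_def c_def by (simp only: append_take_drop_id flip: d)
  have la: "length a = 8" "length b = 8" "length c = 8" using lv by (auto simp: a_def b_def c_def)
  have key: "(wadd v (x@y@z) \<in> Lcode) = Rf (even (wt a)) (even (wt b)) (wadd b c) (x,y,z)" if t: "(x,y,z) \<in> set T" for x y z
  proof -
    have l: "length x = 8" "length y = 8" "length z = 8" using t by (auto simp: setT)
    have "wadd v (x@y@z) = wadd a x @ wadd b y @ wadd c z" using l la e by (simp add: wadd_append)
    then show ?thesis using l la by (simp add: L_char even_wt_wadd Rf_def xor4)
  qed
  have "card {u \<in> even_words 24. halved_adj v u \<and> u \<in> Lcode} = length (filter (\<lambda>(x,y,z). wadd v (x@y@z) \<in> Lcode) T)"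
    by (simp add: nbr[OF v] triple)
  also have "\<dots> = length (filter (Rf (even (wt a)) (even (wt b)) (wadd b c)) T)"
    by (rule len_filter_cong) (use key in auto)
  finally show "card {u \<in> even_words 24. halved_adj v u \<and> u \<in> Lcode} = length (filter (Rf (even (wt a)) (even (wt b)) (wadd b c)) T)" .
  have "card {u \<in> even_words 24. halved_adj v u \<and> u \<notin> Lcode} = length (filter (\<lambda>(x,y,z). wadd v (x@y@z) \<notin> Lcode) T)"
    by (simp add: nbr[OF v] triple)
  also have "\<dots> = length (filter (\<lambda>t. \<not> Rf (even (wt a)) (even (wt b)) (wadd b c) t) T)"
    by (rule len_filter_cong) (use key in auto)
  also have "\<dots> = 276 - length (filter (Rf (even (wt a)) (even (wt b)) (wadd b c)) T)"
    using sum_length_filter_compl[of "Rf (even (wt a)) (even (wt b)) (wadd b c)" T] lenT by simp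
  finally show "card {u \<in> even_words 24. halved_adj v u \<and> u \<notin> Lcode} = 276 - length (filter (Rf (even (wt a)) (even (wt b)) (wadd b c)) T)" .
qed


lemma inC8_even: "length s = 8 \<Longrightarrow> inC8 s \<Longrightarrow> even (wt s)"
  using inC8_ok mem_allw8 C8L_even by blast

lemma count_cases:
  assumes v: "v \<in> even_words 24"
  defines "a \<equiv> take 8 v" and "b \<equiv> take 8 (drop 8 v)" and "c \<equiv> drop 16 v"
  shows "length (filter (Rf (even (wt a)) (even (wt b)) (wadd b c)) T) = (if v \<in> Lcode then 28 else 8)"
proof -
  have lv: "length v = 24" "even (wt v)" using v by (auto simp: even_words_def words_def)
  have d: "drop 8 (drop 8 v) = drop 16 v" by simp
  have e: "v = a @ b @ c" unfolding a_def b_def c_def by (simp only: append_take_drop_id flip: d)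
  have la: "length a = 8" "length b = 8" "length c = 8" using lv by (auto simp: a_def b_def c_def)
  define s where "s = wadd b c"
  have ls: "length s = 8" using la by (simp add: s_def)
  have sa: "s \<in> set (allw 8)" using ls by (rule mem_allw8)
  have vL: "(v \<in> Lcode) = (even (wt a) \<and> even (wt b) \<and> inC8 s)"
    using e la L_char s_def by simp
  have par: "even (wt s) = (even (wt b) = even (wt c))" using la by (simp add: s_def even_wt_wadd)
  have wv: "wt v = wt a + wt b + wt c" using arg_cong[OF e, of wt] by simp
  have tot: "even (wt a + wt b + wt c)" using lv(2) wv by metis
  note f1 = F1[rule_format, OF sa] and f2 = F2[rule_format, OF sa] and f3 = F3[rule_format, OF sa]
  have cf: "length (filter (Rf (even (wt a)) (even (wt b)) (wadd b c)) T) = length (filter (Rf (even (wt a)) (even (wt b)) s) T)"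
    by (simp add: s_def)
  note N = trans[OF cf count_formula[OF ls]]
  show ?thesis
  proof (cases "even (wt a)"; cases "even (wt b)")
    assume ea: "even (wt a)" and eb: "even (wt b)"
    then have se: "even (wt s)" using par tot by auto
    show ?thesis
    proof (cases "inC8 s")
      case True then show ?thesis using N ea eb vL f2 se by (simp add: f2_def)
    next
      case False then show ?thesis using N ea eb vL f2 se by (simp add: f2_def)
    qed
  next
    assume ea: "even (wt a)" and eb: "\<not> even (wt b)"
    then have se: "even (wt s)" using par tot by auto
    show ?thesis using N ea eb vL f3 se by (simp add: g3_def)
  next
    assume ea: "\<not> even (wt a)" and eb: "even (wt b)"
    then have se: "odd (wt s)" using par tot by auto
    show ?thesis using N ea eb vL f1 se by (simp add: f1_def)
  next
    assume ea: "\<not> even (wt a)" and eb: "\<not> even (wt b)"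
    then have se: "odd (wt s)" using par tot by auto
    show ?thesis using N ea eb vL f1 se by (simp add: f1_def)
  qed
qed

theorem lemma5:
  shows "Lcode \<subseteq> even_words 24 \<and>
         perfect_coloring (even_words 24) halved_adj Lcode 28 248 8 268"
  unfolding perfect_coloring_def
  using L_even reduce count_cases by auto

end
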